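(* For $n\ge3$ let $C_n$ be the cycle graph with $n$ vertices and let $\mathbb{Z}$ be the one-dimensional integer lattice (the 2-regular graph on $\mathbb{Z}$ with edges $\{k,k+1\}$). Let $\mu$ be the probability measure on $[0,4]$ that is the image of the normalized Lebesgue measure $\frac{dx}{2\pi}$ on $[0,2\pi)$ under the map $x\mapsto 2(1-\cos x)$ (the spectral measure of the Laplacian of $\mathbb{Z}$). Then for every complex $u$ with $|u|<1$, \[ \lim_{n\to\infty}\zeta_{C_n}(u)^{-1}=\zeta_{\mathbb{Z}}(u)^{-1}=\exp\Big(\int\log(1-2u+u^2+\lambda u)\,d\mu(\lambda)\Big), \] where $\log$ is the principal branch.
   Context: For a vertex transitive $(q+1)$-regular graph $G$ and a fixed vertex $x_0$, the generalized Ihara zeta function is $\zeta_G(u)=\exp\big(\sum_{m\ge1}\frac{N^0_m}{m}u^m\big)$, where $N^0_m$ is the number of reduced $x_0$-cycles of length $m$ in $G$. Here a path of length $m$ is a sequence $(e_1,\ldots,e_m)$ of oriented edges with the terminus of $e_i$ equal to the origin of $e_{i+1}$; it has a backtracking if $e_{i+1}=e_i^{-1}$ for some $i$ (the reversed arc); an $x_0$-cycle is a path starting and ending at $x_0$; it has a tail if $e_m=e_1^{-1}$; it is reduced if it has neither a backtracking nor a tail. *)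

theory Defs
  imports "HOL-Analysis.Analysis"
begin

text \<open>Since the graphs
considered are simple, an oriented edge is an ordered pair of adjacent vertices and a
path of length m is encoded by its vertex list v_0, ..., v_m (length m+1).\<close>

definition reduced_cycles :: "('a \<Rightarrow> 'a \<Rightarrow> bool) \<Rightarrow> 'a \<Rightarrow> nat \<Rightarrow> 'a list set" where
  "reduced_cycles adj x0 m =
     {vs. length vs = Suc m \<and> vs ! 0 = x0 \<and> vs ! m = x0
        \<and> (\<forall>i<m. adj (vs ! i) (vs ! Suc i))
        \<comment> \<open>no backtracking: e_(i+1) = e_i^(-1) iff v_(i+1) = v_(i-1)\<close>
        \<and> (\<forall>i. i + 2 \<le> m \<longrightarrow> vs ! (i + 2) \<noteq> vs ! i)
        \<comment> \<open>no tail: e_m = e_1^(-1) iff v_(m-1) = v_1 (given v_m = v_0 = x0)\<close>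
        \<and> \<not> (vs ! (m - 1) = vs ! 1)}"

definition num_reduced_cycles :: "('a \<Rightarrow> 'a \<Rightarrow> bool) \<Rightarrow> 'a \<Rightarrow> nat \<Rightarrow> nat" where
  "num_reduced_cycles adj x0 m = card (reduced_cycles adj x0 m)"

definition ihara_zeta :: "('a \<Rightarrow> 'a \<Rightarrow> bool) \<Rightarrow> 'a \<Rightarrow> complex \<Rightarrow> complex" where
  "ihara_zeta adj x0 u =
     exp (\<Sum>m. of_nat (num_reduced_cycles adj x0 (Suc m)) / of_nat (Suc m) * u ^ Suc m)"

definition cycle_adj :: "nat \<Rightarrow> nat \<Rightarrow> nat \<Rightarrow> bool" where
  "cycle_adj n a b \<longleftrightarrow> a < n \<and> b < n \<and> (b = (a + 1) mod n \<or> a = (b + 1) mod n)"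

definition int_adj :: "int \<Rightarrow> int \<Rightarrow> bool" where
  "int_adj a b \<longleftrightarrow> \<bar>a - b\<bar> = 1"

definition spectral_measure_Z :: "real measure" where
  "spectral_measure_Z = distr (uniform_measure lborel {0..<2*pi}) borel (\<lambda>x. 2 * (1 - cos x))"

end

theory Submission
  imports Defs "HOL-Complex_Analysis.Complex_Analysis" "HOL-Probability.Probability_Measure"
begin

lemma cycle_adj_step:
  assumes "cycle_adj n a b" "n \<ge> 3"
  shows "a < n \<and> b < n \<and> (\<exists>t\<in>{1, n-1}. b = (a + t) mod n)"
proof -
  have ab: "a < n" "b < n" using assms unfolding cycle_adj_def by auto
  have "b = (a + 1) mod n \<or> b = (a + (n-1)) mod n"
  proof (cases "b = (a + 1) mod n")
    case False
    then have a: "a = (b + 1) mod n" using assms unfolding cycle_adj_def by auto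
    show ?thesis
    proof (cases "b + 1 < n")
      case True
      then have "a = b + 1" using a by simp
      then have "a + (n-1) = b + n" using assms by simp
      then show ?thesis using ab by simp
    next
      case False
      then have "Suc b = n" using ab by simp
      then have "b = n - 1" "a = 0" using a by auto
      then show ?thesis using ab by simp
    qed
  qed simp
  then show ?thesis using ab by auto
qed

lemma cycle_walk:
  assumes n3: "n \<ge> 3" and vs: "vs \<in> reduced_cycles (cycle_adj n) 0 m" and m: "m \<ge> 1"
  shows "\<exists>s\<in>{1, n-1}. \<forall>i\<le>m. vs!i = (s*i) mod n"
proof -
  have adj: "\<And>i. i < m \<Longrightarrow> cycle_adj n (vs!i) (vs!Suc i)"
    and nb: "\<And>i. i + 2 \<le> m \<Longrightarrow> vs!(i+2) \<noteq> vs!i"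
    and v0: "vs!0 = 0"
    using vs unfolding reduced_cycles_def by auto
  have m0: "0 < m" using m by simp
  have "\<exists>s\<in>{1, n-1}. vs!Suc 0 = (vs!0 + s) mod n"
    using cycle_adj_step[OF adj[OF m0] n3] by blast
  then have "\<exists>s\<in>{1, n-1}. vs!1 = (vs!0 + s) mod n" by simp
  then obtain s where s: "s \<in> {1, n-1}" "vs!1 = (vs!0 + s) mod n" by blast
  have step: "i + 1 \<le> m \<Longrightarrow> vs!(i+1) = (vs!i + s) mod n" for i
  proof (induction i)
    case 0
    then show ?case using s by simp
  next
    case (Suc i)
    then have IH: "vs!(i+1) = (vs!i + s) mod n" by simp
    have "i + 1 < m" using Suc.prems by simp
    from cycle_adj_step[OF adj[OF this] n3]
    have "\<exists>t\<in>{1, n-1}. vs!Suc (i+1) = (vs!(i+1) + t) mod n" by blast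
    then obtain t where t0: "t \<in> {1, n-1}" "vs!Suc (i+1) = (vs!(i+1) + t) mod n"
      by blast
    have "Suc (i+1) = i + 2" by simp
    then have t: "t \<in> {1, n-1}" "vs!(i+2) = (vs!(i+1) + t) mod n" using t0 by metis+
    have vi: "vs!i < n" using cycle_adj_step[OF adj[of i] n3] Suc.prems by auto
    show ?case
    proof (rule ccontr)
      assume "vs ! (Suc i + 1) \<noteq> (vs ! Suc i + s) mod n"
      then have "t \<noteq> s" using t by auto
      then have st: "s + t = n" using s t n3 by auto
      have "vs!(i+2) = ((vs!i + s) mod n + t) mod n" using t IH by simp
      also have "\<dots> = (vs!i + (s + t)) mod n" by (simp add: mod_add_left_eq add.assoc)
      also have "\<dots> = vs!i" using st vi by simp
      finally show False using nb[of i] Suc.prems by simp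
    qed
  qed
  have "i \<le> m \<Longrightarrow> vs!i = (s*i) mod n" for i
  proof (induction i)
    case 0
    then show ?case using v0 by simp
  next
    case (Suc i)
    then have "vs!(i+1) = ((s*i) mod n + s) mod n" using step[of i] by simp
    also have "\<dots> = (s * Suc i) mod n" by (simp add: mod_add_left_eq mod_add_right_eq add.commute)
    finally show ?case by simp
  qed
  then show ?thesis using s by blast
qed

lemma cycle_none:
  assumes n3: "n \<ge> 3" and m: "m \<ge> 1" "m < n"
  shows "reduced_cycles (cycle_adj n) 0 m = {}"
proof (rule ccontr)
  assume "reduced_cycles (cycle_adj n) 0 m \<noteq> {}"
  then obtain vs where vs: "vs \<in> reduced_cycles (cycle_adj n) 0 m" by auto
  then have vm: "vs!m = 0" unfolding reduced_cycles_def by auto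
  obtain s where s: "s \<in> {1, n-1}" "\<forall>i\<le>m. vs!i = (s*i) mod n"
    using cycle_walk[OF n3 vs m(1)] by blast
  have z: "(s*m) mod n = 0" using s vm by auto
  show False
  proof (cases "s = 1")
    case True then show ?thesis using z m by simp
  next
    case False
    then have "s = n - 1" using s by auto
    then have "n dvd (n-1)*m" using z by auto
    moreover have "n dvd n * m" by simp
    ultimately have "n dvd n*m - (n-1)*m" using dvd_diff_nat by blast
    moreover have "n*m - (n-1)*m = m" using n3 by (simp add: diff_mult_distrib)
    ultimately have "n dvd m" by simp
    then show False using m by (simp add: nat_dvd_not_less)
  qed
qed

lemma cycle_card_le:
  assumes n3: "n \<ge> 3" and m: "m \<ge> 1"
  shows "num_reduced_cycles (cycle_adj n) 0 m \<le> 2"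
proof -
  let ?A = "{map (\<lambda>i. (1*i) mod n) [0..<Suc m], map (\<lambda>i. ((n-1)*i) mod n) [0..<Suc m]}"
  have "reduced_cycles (cycle_adj n) 0 m \<subseteq> ?A"
  proof
    fix vs assume vs: "vs \<in> reduced_cycles (cycle_adj n) 0 m"
    then have len: "length vs = Suc m" unfolding reduced_cycles_def by auto
    obtain s where s: "s \<in> {1, n-1}" "\<forall>i\<le>m. vs!i = (s*i) mod n"
      using cycle_walk[OF n3 vs m] by blast
    have "vs = map (\<lambda>i. (s*i) mod n) [0..<Suc m]"
      by (rule nth_equalityI) (use len s in \<open>auto simp del: upt_Suc\<close>)
    then show "vs \<in> ?A" using s by auto
  qed
  then have "card (reduced_cycles (cycle_adj n) 0 m) \<le> card ?A"
    by (intro card_mono) auto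
  also have "\<dots> \<le> 2" by (simp add: card_insert_le_m1)
  finally show ?thesis unfolding num_reduced_cycles_def .
qed

lemma int_none:
  assumes m: "m \<ge> 1"
  shows "reduced_cycles int_adj 0 m = {}"
proof (rule ccontr)
  assume "reduced_cycles int_adj 0 m \<noteq> {}"
  then obtain vs where vs: "vs \<in> reduced_cycles int_adj 0 m" by auto
  have adj: "\<And>i. i < m \<Longrightarrow> \<bar>vs!i - vs!Suc i\<bar> = 1"
    and nb: "\<And>i. i + 2 \<le> m \<Longrightarrow> vs!(i+2) \<noteq> vs!i"
    and v0: "vs!0 = 0" and vm: "vs!m = 0"
    using vs unfolding reduced_cycles_def int_adj_def by auto
  define d where "d = vs!1 - vs!0"
  have d: "\<bar>d\<bar> = 1" using adj[of 0] m unfolding d_def by auto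
  have step: "i + 1 \<le> m \<Longrightarrow> vs!(i+1) = vs!i + d" for i
  proof (induction i)
    case 0 then show ?case unfolding d_def by simp
  next
    case (Suc i)
    then have IH: "vs!(i+1) = vs!i + d" by simp
    have "\<bar>vs!(i+1) - vs!(i+2)\<bar> = 1" using adj[of "i+1"] Suc.prems by simp
    moreover have "vs!(i+2) \<noteq> vs!i" using nb[of i] Suc.prems by simp
    ultimately show ?case using IH d by (simp add: abs_if split: if_splits) linarith?
  qed
  have "i \<le> m \<Longrightarrow> vs!i = int i * d" for i
  proof (induction i)
    case 0 then show ?case using v0 by simp
  next
    case (Suc i) then show ?case using step[of i] by (simp add: algebra_simps)
  qed
  then have "int m * d = 0" using vm by auto
  then show False using d m by auto
qed

lemma cis_pair: "cis a + cis (-a) = 2 * complex_of_real (cos a)"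
  by (simp add: complex_eq_iff)

lemma Re_one_minus_pos:
  fixes u :: complex assumes "norm u < 1"
  shows "0 < Re (1 - u * cis x)"
proof -
  have "Re (u * cis x) \<le> norm (u * cis x)" by (rule complex_Re_le_cmod)
  also have "\<dots> = norm u" by (simp add: norm_mult)
  finally show ?thesis using assms by simp
qed

lemma Ln_split:
  fixes u :: complex assumes r: "norm u < 1"
  shows "Ln (1 - 2 * u + u ^ 2 + complex_of_real (2 * (1 - cos x)) * u)
         = Ln (1 - u * cis x) + Ln (1 - u * cis (-x))"
proof -
  have p1: "0 < Re (1 - u * cis x)" "0 < Re (1 - u * cis (-x))"
    using Re_one_minus_pos[OF r, of x] Re_one_minus_pos[OF r, of "-x"] by auto
  have "\<And>z::complex. 0 < Re z \<Longrightarrow> z \<noteq> 0" by auto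
  then have nz: "1 - u * cis x \<noteq> 0" "1 - u * cis (-x) \<noteq> 0" using p1 by blast+
  have i1: "\<bar>Im (Ln (1 - u * cis x))\<bar> < pi/2" "\<bar>Im (Ln (1 - u * cis (-x)))\<bar> < pi/2"
    using Re_Ln_pos_lt_imp p1 by auto
  have "cis x * cis (-x) = 1" by (simp add: cis_mult)
  then have prod: "(1 - u * cis x) * (1 - u * cis (-x)) = 1 - u * (cis x + cis (-x)) + u^2"
    by (simp add: algebra_simps power2_eq_square)
  have "1 - 2 * u + u ^ 2 + complex_of_real (2 * (1 - cos x)) * u = (1 - u * cis x) * (1 - u * cis (-x))"
    unfolding prod cis_pair by (simp add: algebra_simps)
  moreover have "Ln ((1 - u * cis x) * (1 - u * cis (-x))) = Ln (1 - u * cis x) + Ln (1 - u * cis (-x))"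
    by (rule Ln_times_simple) (use nz i1 in auto)
  ultimately show ?thesis by simp
qed

lemma Ln_cis_sums:
  fixes u :: complex assumes r: "norm u < 1"
  shows "(\<lambda>n. - ((u * cis x) ^ n) / of_nat n) sums Ln (1 - u * cis x)"
proof -
  have "norm (- (u * cis x)) < 1" using r by (simp add: norm_mult)
  from Ln_series'[OF this] show ?thesis by simp
qed

definition gterm :: "complex \<Rightarrow> nat \<Rightarrow> real \<Rightarrow> complex" where
  "gterm u n x = - (2 * u ^ n) / of_nat n * complex_of_real (cos (real n * x))"

lemma gterm_sums:
  fixes u :: complex assumes r: "norm u < 1"
  shows "(\<lambda>n. gterm u n x) sums Ln (1 - 2 * u + u ^ 2 + complex_of_real (2 * (1 - cos x)) * u)"
proof -
  have "(\<lambda>n. - ((u * cis x) ^ n) / of_nat n + - ((u * cis (-x)) ^ n) / of_nat n)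
        sums (Ln (1 - u * cis x) + Ln (1 - u * cis (-x)))"
    by (intro sums_add Ln_cis_sums r)
  moreover have "- ((u * cis x) ^ n) / of_nat n + - ((u * cis (-x)) ^ n) / of_nat n = gterm u n x" for n
  proof -
    have "- ((u * cis x) ^ n) / of_nat n + - ((u * cis (-x)) ^ n) / of_nat n
        = - (u ^ n * (cis (real n * x) + cis (- (real n * x)))) / of_nat n"
    proof -
      have e: "(u * cis x)^n = u^n * cis (real n * x)" "(u * cis (-x))^n = u^n * cis (- (real n * x))"
        by (simp_all only: power_mult_distrib Complex.DeMoivre mult_minus_right)
      show ?thesis unfolding e by (simp add: algebra_simps add_divide_distrib diff_divide_distrib)
    qed
    also have "\<dots> = gterm u n x" unfolding cis_pair gterm_def by (simp add: algebra_simps)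
    finally show ?thesis .
  qed
  ultimately show ?thesis using Ln_split[OF r] by simp
qed

lemma gterm_bound:
  fixes u :: complex
  shows "norm (gterm u n x) \<le> 2 * norm u ^ n"
proof (cases "n = 0")
  case True then show ?thesis by (simp add: gterm_def)
next
  case False
  have "norm (gterm u n x) = 2 * norm u ^ n / real n * \<bar>cos (real n * x)\<bar>"
    unfolding gterm_def by (simp add: norm_mult norm_divide norm_power)
  also have "\<dots> \<le> 2 * norm u ^ n / 1 * 1"
    by (intro mult_mono divide_left_mono) (use False in auto)
  finally show ?thesis by simp
qed

lemma uniform_integral_real:
  fixes f :: "real \<Rightarrow> real" and a b :: real
  assumes ab: "a < b" and f[measurable]: "f \<in> borel_measurable borel"
  shows "integral\<^sup>L (uniform_measure lborel {a..<b}) f = (LBINT x=a..b. f x) / (b - a)"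
proof -
  have "uniform_measure lborel {a..<b} = density lborel (\<lambda>x. ennreal (indicator {a..<b} x / (b - a)))"
    unfolding uniform_measure_def using ab
    by (intro density_cong) (auto simp: divide_ennreal ennreal_indicator[symmetric] simp del: ennreal_indicator)
  then have "integral\<^sup>L (uniform_measure lborel {a..<b}) f
      = integral\<^sup>L lborel (\<lambda>x. (indicator {a..<b} x / (b - a)) *\<^sub>R f x)"
    using ab by (simp add: integral_density)
  also have "\<dots> = integral\<^sup>L lborel (\<lambda>x. (indicator {a..<b} x *\<^sub>R f x) / (b - a))"
    by (simp add: field_simps)
  also have "\<dots> = (LBINT x:{a..<b}. f x) / (b - a)"
    by (simp add: set_lebesgue_integral_def)
  also have "\<dots> = (LBINT x=a..b. f x) / (b - a)"
    using interval_integral_Ico[of a b f] ab by simp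
  finally show ?thesis .
qed

lemma cos_integral:
  assumes n: "n > 0"
  shows "integral\<^sup>L (uniform_measure lborel {0..<2*pi}) (\<lambda>x. cos (real n * x)) = 0"
proof -
  have I: "(LBINT x=ereal 0..ereal (2*pi). cos (real n * x)) = sin (real n * (2*pi)) / real n - sin (real n * 0) / real n"
  proof (rule interval_integral_FTC_finite)
    show "continuous_on {min 0 (2 * pi)..max 0 (2 * pi)} (\<lambda>x. cos (real n * x))"
      by (intro continuous_intros)
    fix x
    have "((\<lambda>x. sin (real n * x) / real n) has_real_derivative cos (real n * x)) (at x)"
      using n by (auto intro!: derivative_eq_intros)
    then show "((\<lambda>x. sin (real n * x) / real n) has_vector_derivative cos (real n * x))
       (at x within {min 0 (2 * pi)..max 0 (2 * pi)})"
      by (simp add: has_real_derivative_iff_has_vector_derivative has_vector_derivative_at_within)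
  qed
  also have "\<dots> = 0"
  proof -
    have "real n * (2*pi) = real (2*n) * pi" by simp
    then show ?thesis by (simp only: sin_npi) simp
  qed
  finally have "(LBINT x=ereal 0..ereal (2*pi). cos (real n * x)) = 0" .
  then show ?thesis by (subst uniform_integral_real) auto
qed

lemma spectral_integral_zero:
  fixes u :: complex assumes r: "norm u < 1"
  shows "integral\<^sup>L spectral_measure_Z (\<lambda>t. Ln (1 - 2 * u + u ^ 2 + complex_of_real t * u)) = 0"
proof -
  define M where "M = uniform_measure lborel {0..<2*pi}"
  interpret P: prob_space M
    unfolding M_def by (rule prob_space_uniform_measure) auto
  have "integral\<^sup>L spectral_measure_Z (\<lambda>t. Ln (1 - 2 * u + u ^ 2 + complex_of_real t * u))
      = integral\<^sup>L M (\<lambda>x. Ln (1 - 2 * u + u ^ 2 + complex_of_real (2 * (1 - cos x)) * u))"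
    unfolding spectral_measure_Z_def M_def
    by (rule integral_distr) measurable
  also have "\<dots> = integral\<^sup>L M (\<lambda>x. \<Sum>n. gterm u n x)"
    by (intro Bochner_Integration.integral_cong) (use gterm_sums[OF r] in \<open>auto simp: sums_iff\<close>)
  also have "\<dots> = (\<Sum>n. integral\<^sup>L M (gterm u n))"
  proof (rule integral_suminf)
    have meas: "gterm u n \<in> borel_measurable M" for n
      unfolding gterm_def M_def by measurable
    show int: "integrable M (gterm u n)" for n
      by (rule P.integrable_const_bound[of _ "2 * norm u ^ n"]) (use gterm_bound meas in auto)
    have geo: "summable (\<lambda>n. 2 * norm u ^ n)"
      using r by (intro summable_mult) (simp add: summable_geometric)
    show "AE x in M. summable (\<lambda>n. norm (gterm u n x))"
      by (rule AE_I2, rule summable_comparison_test'[OF geo]) (simp add: gterm_bound)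
    show "summable (\<lambda>n. \<integral>x. norm (gterm u n x) \<partial>M)"
    proof (rule summable_comparison_test'[OF geo])
      fix n
      have "(\<integral>x. norm (gterm u n x) \<partial>M) \<le> 2 * norm u ^ n"
        by (rule P.integral_le_const) (use int gterm_bound in auto)
      moreover have "0 \<le> (\<integral>x. norm (gterm u n x) \<partial>M)" by simp
      ultimately show "norm (\<integral>x. norm (gterm u n x) \<partial>M) \<le> 2 * norm u ^ n" by simp
    qed
  qed
  also have "\<dots> = (\<Sum>n. 0)"
  proof (intro suminf_cong)
    fix n
    show "integral\<^sup>L M (gterm u n) = 0"
    proof (cases "n = 0")
      case True
      have "gterm u 0 = (\<lambda>x. 0)" by (simp add: gterm_def fun_eq_iff)
      then show ?thesis using True by simp
    next
      case False
      have "integral\<^sup>L M (gterm u n) = - (2 * u ^ n) / of_nat n *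
          complex_of_real (integral\<^sup>L M (\<lambda>x. cos (real n * x)))"
        unfolding gterm_def by simp
      also have "\<dots> = 0" using cos_integral[of n] False unfolding M_def by simp
      finally show ?thesis .
    qed
  qed
  finally show ?thesis by simp
qed

lemma zeta_Z: "ihara_zeta int_adj 0 u = 1"
  unfolding ihara_zeta_def num_reduced_cycles_def using int_none by simp

lemma cycle_limit:
  fixes u :: complex
  assumes r: "norm u < 1"
  shows "(\<lambda>n. inverse (ihara_zeta (cycle_adj (n + 3)) 0 u)) \<longlonglongrightarrow> 1"
proof -
  define a where "a n m = of_nat (num_reduced_cycles (cycle_adj (n+3)) 0 (Suc m)) / of_nat (Suc m) * u ^ Suc m" for n m
  define S where "S n = (\<Sum>m. a n m)" for n
  have bound: "norm (a n m) \<le> 2 * norm u ^ Suc m" for n m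
  proof -
    have c: "real (num_reduced_cycles (cycle_adj (n+3)) 0 (Suc m)) \<le> 2"
      using cycle_card_le[of "n+3" "Suc m"] by simp
    have "norm (a n m) = real (num_reduced_cycles (cycle_adj (n+3)) 0 (Suc m)) / real (Suc m) * norm u ^ Suc m"
      unfolding a_def by (simp add: norm_mult norm_divide norm_power del: of_nat_Suc)
    also have "\<dots> \<le> 2 / 1 * norm u ^ Suc m"
      by (intro mult_right_mono frac_le) (use c in auto)
    finally show ?thesis by simp
  qed
  have zero: "m < n + 2 \<Longrightarrow> a n m = 0" for n m
    unfolding a_def num_reduced_cycles_def using cycle_none[of "n+3" "Suc m"] by simp
  have geo: "summable (\<lambda>m. 2 * norm u ^ Suc m)"
    using r by (intro summable_mult) (simp add: summable_geometric)
  have summ: "summable (a n)" for n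
    by (rule summable_comparison_test[OF _ geo]) (use bound in auto)
  have Sb: "norm (S n) \<le> 2 * norm u ^ (n+3) / (1 - norm u)" for n
  proof -
    have sn: "summable (\<lambda>m. norm (a n (m + (n+2))))"
      by (rule summable_comparison_test'[OF summable_ignore_initial_segment[OF geo, of "n+2"]])
         (simp only: norm_ge_zero abs_of_nonneg real_norm_def bound)
    have "S n = (\<Sum>m. a n (m + (n+2)))"
      unfolding S_def using suminf_minus_initial_segment[OF summ[of n], of "n+2"] zero by simp
    also have "norm \<dots> \<le> (\<Sum>m. norm (a n (m + (n+2))))"
      by (rule summable_norm[OF sn])
    also have "\<dots> \<le> (\<Sum>m. (2 * norm u ^ (n+3)) * norm u ^ m)"
    proof (rule suminf_le)
      show "norm (a n (m + (n + 2))) \<le> 2 * norm u ^ (n + 3) * norm u ^ m" for m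
      proof -
        have e: "Suc (m + (n+2)) = (n+3) + m" by simp
        have "norm u ^ Suc (m + (n+2)) = norm u ^ (n+3) * norm u ^ m"
          by (subst e) (rule power_add)
        then show ?thesis using bound[of n "m + (n+2)"] by simp
      qed
      show "summable (\<lambda>m. norm (a n (m + (n + 2))))" by (rule sn)
      show "summable (\<lambda>m. 2 * norm u ^ (n + 3) * norm u ^ m)"
        using r by (intro summable_mult) (simp add: summable_geometric)
    qed
    also have "\<dots> = 2 * norm u ^ (n+3) / (1 - norm u)"
      using r by (simp add: suminf_mult suminf_geometric divide_inverse)
    finally show ?thesis .
  qed
  have "(\<lambda>n. norm u ^ n) \<longlonglongrightarrow> 0" by (rule LIMSEQ_power_zero) (use r in simp)
  then have "(\<lambda>n. norm u ^ (n+3)) \<longlonglongrightarrow> 0" by (rule LIMSEQ_ignore_initial_segment)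
  then have "(\<lambda>n. 2 * norm u ^ (n+3) / (1 - norm u)) \<longlonglongrightarrow> 0"
    by (intro tendsto_divide_zero tendsto_mult_right_zero)
  then have "S \<longlonglongrightarrow> 0"
    by (rule Lim_null_comparison[rotated]) (use Sb in simp)
  then have "(\<lambda>n. exp (- S n)) \<longlonglongrightarrow> exp (- 0)"
    by (intro isCont_tendsto_compose[OF isCont_exp] tendsto_minus)
  moreover have "inverse (ihara_zeta (cycle_adj (n + 3)) 0 u) = exp (- S n)" for n
    unfolding ihara_zeta_def S_def a_def by (simp add: exp_minus)
  ultimately show ?thesis by simp
qed

theorem corollary2:
  fixes u :: complex
  assumes "norm u < 1"
  shows "(\<lambda>n. inverse (ihara_zeta (cycle_adj (n + 3)) 0 u))
           \<longlonglongrightarrow> inverse (ihara_zeta int_adj 0 u)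
         \<and> inverse (ihara_zeta int_adj 0 u)
             = exp (integral\<^sup>L spectral_measure_Z
                      (\<lambda>t. Ln (1 - 2 * u + u ^ 2 + complex_of_real t * u)))"
  using cycle_limit[OF assms] spectral_integral_zero[OF assms] by (simp add: zeta_Z)

end
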